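(* Let $\rho<r<1$, and let $\lambda>0$ and $\mathcal{D}\in\mathcal{M}_S$ satisfy $\mathcal{R}_r\mathcal{D}=\lambda\mathcal{D}$. Then \[\Big(\frac{1}{1-r}-\frac{r}{2+2r+2r^2}\Big)^{-1}\leq\lambda\leq\frac{2}{2+r}.\]
   Context: Let $q_0=(\tfrac12,\tfrac{\sqrt3}{2})$, $q_1=(0,0)$, $q_2=(1,0)$, $\rho=\frac{\sqrt5-1}{2}$, $F_0(x)=\rho^2(x-q_0)+q_0$, $F_1(x)=\rho(x-q_1)+q_1$, $F_2(x)=\rho(x-q_2)+q_2$. For a finite word $w$ over $\{0,1,2\}$, $|w|$ is its length and $F_w=F_{w_1}\circ\cdots\circ F_{w_{|w|}}$. $W_1$ is a set of words of the form $w_1\cdots w_n0$ ($n\ge0$, $w_i\in\{1,2\}$) containing exactly one word for each distinct map $F_w$ of this form. $V_0=\{q_0,q_1,q_2\}$, $V_1=\bigcup_{w\in W_1}F_wV_0$. $\mathcal{M}$ is the set of forms $\mathcal{D}(f,g)=\frac12\sum_{i,j}a_{ij}(f(q_i)-f(q_j))(g(q_i)-g(q_j))$ on functions on $V_0$ with $(a_{ij})$ symmetric, $a_{ii}=0$, $a_{ij}\ge0$ and irreducible; $\mathcal{M}_S$ is the subset with $a_{01}=a_{02}$. $\Psi_r\mathcal{D}(f,g)=\sum_{w\in W_1}r^{-|w|+1}\mathcal{D}(f\circ F_w,g\circ F_w)$ on $\mathrm{Dom}(\Psi_r\mathcal{D})=\{f:V_1\to\mathbb{R}:\Psi_r\mathcal{D}(f,f)<\infty\}$,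 and for $\rho<r<1$, $\mathcal{R}_r\mathcal{D}(u)=\inf\{\Psi_r\mathcal{D}(f):f\in\mathrm{Dom}(\Psi_r\mathcal{D}),f|_{V_0}=u\}$ for $u:V_0\to\mathbb{R}$. *)

theory Defs
  imports "HOL-Analysis.Analysis"
begin

definition rho :: real where
  "rho = (sqrt 5 - 1) / 2"

definition q :: "nat \<Rightarrow> real \<times> real" where
  "q i = (if i = 0 then (1/2, sqrt 3 / 2) else if i = 1 then (0, 0) else (1, 0))"

definition F :: "nat \<Rightarrow> real \<times> real \<Rightarrow> real \<times> real" where
  "F i x = (if i = 0 then rho\<^sup>2 *\<^sub>R (x - q 0) + q 0 else rho *\<^sub>R (x - q i) + q i)"

definition Fw :: "nat list \<Rightarrow> real \<times> real \<Rightarrow> real \<times> real" where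
  "Fw w = foldr (\<lambda>i g. F i \<circ> g) w id"

definition words0 :: "nat list set" where
  "words0 = {ws @ [0] | ws. set ws \<subseteq> {1, 2}}"

definition is_W1 :: "nat list set \<Rightarrow> bool" where
  "is_W1 W \<longleftrightarrow> W \<subseteq> words0 \<and> (\<forall>w\<in>words0. \<exists>!v. v \<in> W \<and> Fw v = Fw w)"

definition V1 :: "nat list set \<Rightarrow> (real \<times> real) set" where
  "V1 W = (\<Union>w\<in>W. Fw w ` q ` {0, 1, 2})"

text \<open>The form D(f,g) with coefficient matrix a; functions on V_0 are given by their
  values at q_0, q_1, q_2, i.e. as functions on the index set {0,1,2}.\<close>
definition DF :: "(nat \<Rightarrow> nat \<Rightarrow> real) \<Rightarrow> (nat \<Rightarrow> real) \<Rightarrow> (nat \<Rightarrow> real) \<Rightarrow> real" where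
  "DF a f g = (1/2) * (\<Sum>i<3. \<Sum>j<3. a i j * (f i - f j) * (g i - g j))"

definition irreducible3 :: "(nat \<Rightarrow> nat \<Rightarrow> real) \<Rightarrow> bool" where
  "irreducible3 a \<longleftrightarrow>
     (\<forall>S. S \<subseteq> {0,1,2} \<and> S \<noteq> {} \<and> S \<noteq> {0,1,2} \<longrightarrow>
        (\<exists>i\<in>S. \<exists>j\<in>{0,1,2} - S. a i j \<noteq> 0))"

definition in_M :: "(nat \<Rightarrow> nat \<Rightarrow> real) \<Rightarrow> bool" where
  "in_M a \<longleftrightarrow> (\<forall>i<3. \<forall>j<3. a i j = a j i) \<and> (\<forall>i<3. a i i = 0)
      \<and> (\<forall>i<3. \<forall>j<3. a i j \<ge> 0) \<and> irreducible3 a"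

definition in_MS :: "(nat \<Rightarrow> nat \<Rightarrow> real) \<Rightarrow> bool" where
  "in_MS a \<longleftrightarrow> in_M a \<and> a 0 1 = a 0 2"

definition Psi_term :: "real \<Rightarrow> (nat \<Rightarrow> nat \<Rightarrow> real) \<Rightarrow> (real \<times> real \<Rightarrow> real) \<Rightarrow> nat list \<Rightarrow> real" where
  "Psi_term r a f w = r powi (1 - int (length w)) * DF a (\<lambda>i. f (Fw w (q i))) (\<lambda>i. f (Fw w (q i)))"

definition Psi :: "real \<Rightarrow> (nat \<Rightarrow> nat \<Rightarrow> real) \<Rightarrow> nat list set \<Rightarrow> (real \<times> real \<Rightarrow> real) \<Rightarrow> real" where
  "Psi r a W f = (\<Sum>\<^sub>\<infinity>w\<in>W. Psi_term r a f w)"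

text \<open>Dom(Psi_r D): finite energy (the terms are nonnegative, so summability = finiteness).\<close>
definition PsiDom :: "real \<Rightarrow> (nat \<Rightarrow> nat \<Rightarrow> real) \<Rightarrow> nat list set \<Rightarrow> (real \<times> real \<Rightarrow> real) set" where
  "PsiDom r a W = {f. (Psi_term r a f) summable_on W}"

text \<open>Boundary condition f|_{V_0} = u.  q_0 lies in V_1, while q_1, q_2 are only accumulation
  points of V_1; there the value of f is understood as its limit along V_1.\<close>
definition restricts_to :: "nat list set \<Rightarrow> (real \<times> real \<Rightarrow> real) \<Rightarrow> (nat \<Rightarrow> real) \<Rightarrow> bool" where
  "restricts_to W f u \<longleftrightarrow> f (q 0) = u 0
      \<and> (f \<longlongrightarrow> u 1) (at (q 1) within V1 W) \<and> (f \<longlongrightarrow> u 2) (at (q 2) within V1 W)"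

definition R_r :: "real \<Rightarrow> (nat \<Rightarrow> nat \<Rightarrow> real) \<Rightarrow> nat list set \<Rightarrow> (nat \<Rightarrow> real) \<Rightarrow> real" where
  "R_r r a W u = Inf {Psi r a W f | f. f \<in> PsiDom r a W \<and> restricts_to W f u}"

end

theory Submission
  imports Defs
begin


definition hh :: real where "hh = sqrt 3 / 2"

lemma hh_pos: "hh > 0" unfolding hh_def by simp

lemma rho_pos: "0 < rho" unfolding rho_def
  by (simp add: real_less_rsqrt)

lemma rho_sq: "rho^2 = 1 - rho"
  unfolding rho_def by (simp add: power2_eq_square field_simps algebra_simps)

lemma sqrt5_bounds: "2.236 < sqrt 5" "sqrt 5 < 2.2362"
proof -
  show "2.236 < sqrt 5" by (rule real_less_rsqrt) (simp add: power2_eq_square)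
  have "sqrt 5 < sqrt (2.2362^2)" by (subst real_sqrt_less_iff) (simp add: power2_eq_square)
  then show "sqrt 5 < 2.2362" by simp
qed

lemma rho_bounds: "0.618 < rho" "rho < 0.6181"
  using sqrt5_bounds unfolding rho_def by auto

lemma rho_lt1: "rho < 1" using rho_bounds by simp

lemma rho3: "rho^3 = 2*rho - 1"
proof -
  have "rho^3 - (2*rho - 1) = (rho - 1) * (rho^2 + rho - 1)" by algebra
  then show ?thesis using rho_sq by simp
qed

lemma rho4: "rho^4 = 2 - 3*rho"
proof -
  have "rho^4 - (2 - 3*rho) = (rho^2 - rho + 2) * (rho^2 + rho - 1)" by algebra
  then show ?thesis using rho_sq by simp
qed

lemma q0: "q 0 = (1/2, hh)" and q1: "q 1 = (0,0)" and q2: "q 2 = (1,0)"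
  by (auto simp: q_def hh_def)
lemma q1'[simp]: "q (Suc 0) = (0,0)" and q2'[simp]: "q (Suc (Suc 0)) = (1,0)"
  by (auto simp: q_def)

lemma Fw_Nil[simp]: "Fw [] = id" by (simp add: Fw_def)
lemma Fw_Cons[simp]: "Fw (i#s) = F i \<circ> Fw s" by (simp add: Fw_def)
lemma Fw_append: "Fw (s@t) = Fw s \<circ> Fw t" by (induction s) auto

lemma snd_F12: "i \<in> {1,2} \<Longrightarrow> snd (F i x) = rho * snd x"
  by (auto simp: F_def q1 q2 algebra_simps)

lemma snd_Fw: "set s \<subseteq> {1,2} \<Longrightarrow> snd (Fw s x) = rho ^ length s * snd x"
  by (induction s) (auto simp: snd_F12)

lemma F0_q0: "F 0 (q 0) = q 0" by (simp add: F_def)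
lemma F0_q1: "F 0 (q 1) = F 1 (q 0)"
  by (simp add: F_def q0 rho_sq prod_eq_iff algebra_simps field_simps)
lemma F0_q2: "F 0 (q 2) = F 2 (q 0)"
  by (simp add: F_def q0 q2 rho_sq prod_eq_iff algebra_simps field_simps)

definition P :: "nat list \<Rightarrow> real \<times> real" where "P s = Fw s (q 0)"

lemma Fw_snoc: "Fw (s@[i]) x = Fw s (F i x)" by (simp add: Fw_append)
lemma cell_v0: "Fw (s@[0]) (q 0) = P s" unfolding Fw_snoc P_def F0_q0 ..
lemma cell_v1: "Fw (s@[0]) (q 1) = P (s@[1])" unfolding Fw_snoc P_def F0_q1 ..
lemma cell_v2: "Fw (s@[0]) (q 2) = P (s@[2])" unfolding Fw_snoc P_def F0_q2 ..

lemma snd_P: "set s \<subseteq> {1,2} \<Longrightarrow> snd (P s) = rho ^ length s * hh"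
  by (simp add: P_def snd_Fw q0)


lemma DF_expand:
  assumes "in_M a"
  shows "DF a x x = a 0 1*(x 0 - x 1)^2 + a 0 2*(x 0 - x 2)^2 + a 1 2*(x 1 - x 2)^2"
proof -
  from assms have s: "a 1 0 = a 0 1" "a 2 0 = a 0 2" "a 2 1 = a 1 2" "a 0 0 = 0" "a 1 1 = 0" "a 2 2 = 0"
    unfolding in_M_def by auto
  have "DF a x x = (1/2) * (\<Sum>i<3. \<Sum>j<3. a i j * (x i - x j) * (x i - x j))" by (simp add: DF_def)
  also have "\<dots> = (1/2) * (a 0 1 * (x 0 - x 1)*(x 0 - x 1) + a 0 2 * (x 0 - x 2)*(x 0 - x 2)
     + a 1 0 * (x 1 - x 0)*(x 1 - x 0) + a 1 2 * (x 1 - x 2)*(x 1 - x 2)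
     + a 2 0 * (x 2 - x 0)*(x 2 - x 0) + a 2 1 * (x 2 - x 1)*(x 2 - x 1))"
    by (simp add: eval_nat_numeral algebra_simps)
  also have "\<dots> = a 0 1*(x 0 - x 1)^2 + a 0 2*(x 0 - x 2)^2 + a 1 2*(x 1 - x 2)^2"
    unfolding s by (simp add: power2_eq_square algebra_simps)
  finally show ?thesis .
qed

lemma DF_nonneg: "in_M a \<Longrightarrow> DF a x x \<ge> 0"
  by (subst DF_expand) (auto simp: in_M_def intro!: add_nonneg_nonneg mult_nonneg_nonneg)

lemma Psi_term_nonneg: "in_M a \<Longrightarrow> r > 0 \<Longrightarrow> Psi_term r a f v \<ge> 0"
  unfolding Psi_term_def by (auto intro!: mult_nonneg_nonneg DF_nonneg)

lemma cellterm:
  assumes "in_M a"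
  shows "Psi_term r a f (s@[0]) = (a 0 1*(f (P s) - f (P (s@[1])))^2 + a 0 2*(f (P s) - f (P (s@[2])))^2
      + a 1 2*(f (P (s@[1])) - f (P (s@[2])))^2) / r ^ length s"
proof -
  have "r powi (1 - int (length (s@[0]))) = inverse (r ^ length s)"
    by (simp add: power_int_minus)
  then show ?thesis unfolding Psi_term_def DF_expand[OF assms] cell_v0 cell_v1 cell_v2
    by (simp add: divide_inverse mult.commute)
qed

lemma words0_snoc: "set s \<subseteq> {1,2} \<Longrightarrow> s@[0] \<in> words0" by (auto simp: words0_def)

lemma rho_pow_inj: "rho ^ m = rho ^ n \<Longrightarrow> m = n"
  using rho_pos rho_lt1 by (metis linorder_neqE_nat order_less_irrefl power_strict_decreasing_iff)

lemma len_P: "set s \<subseteq> {1,2} \<Longrightarrow> set s' \<subseteq> {1,2} \<Longrightarrow> P s = P s' \<Longrightarrow> length s = length s'"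
proof -
  assume a: "set s \<subseteq> {1,2}" "set s' \<subseteq> {1,2}" "P s = P s'"
  then have "rho ^ length s * hh = rho ^ length s' * hh" using snd_P by metis
  then show ?thesis using hh_pos rho_pow_inj by simp
qed

definition rep :: "nat list set \<Rightarrow> nat list \<Rightarrow> nat list" where
  "rep W s = (THE v. v \<in> W \<and> Fw v = Fw (s@[0]))"

lemma rep_props:
  assumes "is_W1 W" "set s \<subseteq> {1,2}"
  shows "rep W s \<in> W" "Fw (rep W s) = Fw (s@[0])"
proof -
  have "\<exists>!v. v \<in> W \<and> Fw v = Fw (s@[0])" using assms words0_snoc unfolding is_W1_def by blast
  from theI'[OF this] show "rep W s \<in> W" "Fw (rep W s) = Fw (s@[0])" unfolding rep_def by auto
qed

lemma rep_term:
  assumes "is_W1 W" "set s \<subseteq> {1,2}"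
  shows "Psi_term r a f (rep W s) = Psi_term r a f (s@[0])"
proof -
  have "rep W s \<in> words0" using rep_props(1)[OF assms] assms(1) unfolding is_W1_def by auto
  then obtain s' where s': "rep W s = s'@[0]" "set s' \<subseteq> {1,2}" unfolding words0_def by auto
  have "P s' = P s" using rep_props(2)[OF assms] s' cell_v0 by metis
  then have "length s' = length s" using len_P s' assms by metis
  then show ?thesis unfolding Psi_term_def rep_props(2)[OF assms] by (simp add: s')
qed

lemma sum_le_Psi:
  assumes W: "is_W1 W" and a: "in_M a" and r: "r > 0" and f: "f \<in> PsiDom r a W"
    and S: "finite S" "\<forall>s\<in>S. set s \<subseteq> {1,2}" "inj_on P S"
  shows "(\<Sum>s\<in>S. Psi_term r a f (s@[0])) \<le> Psi r a W f"
proof -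
  have inj: "inj_on (rep W) S"
  proof (rule inj_onI)
    fix s s' assume "s \<in> S" "s' \<in> S" "rep W s = rep W s'"
    then have "Fw (s@[0]) = Fw (s'@[0])" using rep_props(2) W S(2) by metis
    then have "P s = P s'" using cell_v0 by metis
    then show "s = s'" using S(3) \<open>s \<in> S\<close> \<open>s' \<in> S\<close> by (meson inj_onD)
  qed
  have "(\<Sum>s\<in>S. Psi_term r a f (s@[0])) = (\<Sum>s\<in>S. Psi_term r a f (rep W s))"
    using rep_term[OF W] S(2) by simp
  also have "\<dots> = (\<Sum>v\<in>rep W ` S. Psi_term r a f v)" using sum.reindex[OF inj, of "Psi_term r a f"] by (simp add: comp_def)
  also have "\<dots> = infsum (Psi_term r a f) (rep W ` S)" using S(1) by simp
  also have "\<dots> \<le> infsum (Psi_term r a f) W"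
    apply (rule infsum_mono2)
    using S f rep_props(1)[OF W] Psi_term_nonneg[OF a r] by (auto simp: PsiDom_def)
  finally show ?thesis unfolding Psi_def .
qed


lemma F1_pair: "F 1 (c, d) = (rho*c, rho*d)" by (simp add: F_def)
lemma F2_pair: "F 2 (c, d) = (rho*c - rho + 1, rho*d)" by (simp add: F_def q2 algebra_simps)
lemma F1_pair': "F (Suc 0) (c, d) = (rho*c, rho*d)" by (simp add: F_def)
lemma F2_pair': "F (Suc (Suc 0)) (c, d) = (rho*c - rho + 1, rho*d)" by (simp add: F_def algebra_simps)

lemma P_rep1: "P (replicate n 1) = (rho^n/2, rho^n*hh)"
  by (induction n) (auto simp: P_def q0 F1_pair')

lemma P_rep2: "P (replicate n 2) = (rho^n/2 + 1 - rho^n, rho^n*hh)"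
  by (induction n) (auto simp: P_def q0 F2_pair algebra_simps)

lemma P_Cons1: "P (1#s) = F 1 (P s)" and P_Cons2: "P (2#s) = F 2 (P s)"
  by (simp_all add: P_def)

lemma P_Nil: "P [] = (1/2, hh)" by (simp add: P_def q0)

lemmas Pcomp = P_Cons1 P_Cons2 P_Nil F1_pair F2_pair

lemma P_ex:
  "P [1,2] = ((3*rho-1)/2, (1-rho)*hh)"
  "P [2,1] = ((3-3*rho)/2, (1-rho)*hh)"
  "P [1,2,1] = ((6*rho-3)/2, (2*rho-1)*hh)"
  "P [1,1,2] = ((3-4*rho)/2, (2*rho-1)*hh)"
  "P [2,1,2] = ((5-6*rho)/2, (2*rho-1)*hh)"
  "P [2,2,1] = ((4*rho-1)/2, (2*rho-1)*hh)"
  "P [1,2,1,1] = P [1,1,2,2]"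
  "P [2,1,2,2] = P [2,2,1,1]"
  unfolding Pcomp prod_eq_iff fst_conv snd_conv
  by (use rho_sq in algebra)+


lemma P_ex':
  "P [Suc 0,2] = ((3*rho-1)/2, (1-rho)*hh)"
  "P [2,Suc 0] = ((3-3*rho)/2, (1-rho)*hh)"
  "P [Suc 0,2,Suc 0] = ((6*rho-3)/2, (2*rho-1)*hh)"
  "P [Suc 0,Suc 0,2] = ((3-4*rho)/2, (2*rho-1)*hh)"
  "P [2,Suc 0,2] = ((5-6*rho)/2, (2*rho-1)*hh)"
  "P [2,2,Suc 0] = ((4*rho-1)/2, (2*rho-1)*hh)"
  using P_ex by simp_all

lemma rho_bnd: "309/500 < rho" "rho < 6181/10000" using rho_bounds by simp_all
lemma P_rep1': "P (replicate n (Suc 0)) = (rho^n/2, rho^n*hh)" using P_rep1 by simp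
lemma rho_pow2: "rho^n = 1 - rho \<longleftrightarrow> n = 2" using rho_pow_inj[of n 2] rho_sq by auto
lemma rho_pow3: "rho^n = 2*rho - 1 \<longleftrightarrow> n = 3" using rho_pow_inj[of n 3] rho3 by auto

lemma hh_ne[simp]: "hh \<noteq> 0" using hh_pos by simp

lemma pow_hh_eq: "rho^n*hh = rho^m*hh \<longleftrightarrow> n = m"
  using hh_pos rho_pow_inj by auto
lemma pow_hh2: "rho^n*hh = (1-rho)*hh \<longleftrightarrow> n = 2"
  using pow_hh_eq[of n 2] rho_sq by simp
lemma pow_hh3: "rho^n*hh = (2*rho-1)*hh \<longleftrightarrow> n = 3"
  using pow_hh_eq[of n 3] rho3 by simp
lemma pow_hh1: "rho^n*hh = hh \<longleftrightarrow> n = 0"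
  using pow_hh_eq[of n 0] by simp

definition EE :: "nat list set" where "EE = {[1,2],[1,2,1],[1,1,2],[2,1],[2,1,2],[2,2,1]}"

lemma EE_inj: "e \<in> EE \<Longrightarrow> e' \<in> EE \<Longrightarrow> P e = P e' \<Longrightarrow> e = e'"
  unfolding EE_def
  by (auto simp: P_ex' prod_eq_iff) (use rho_bnd in linarith)+

lemma EE_set: "e \<in> EE \<Longrightarrow> set e \<subseteq> {1,2}" unfolding EE_def by auto

lemma P_small:
  "P [Suc 0, Suc 0] = ((1-rho)/2, (1-rho)*hh)"
  "P [Suc 0, Suc 0, Suc 0] = ((2*rho-1)/2, (2*rho-1)*hh)"
  "P [2, 2] = ((1+rho)/2, (1-rho)*hh)"
  "P [2, 2, 2] = ((3-2*rho)/2, (2*rho-1)*hh)"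
proof -
  have "[Suc 0, Suc 0] = replicate 2 1" "[Suc 0, Suc 0, Suc 0] = replicate 3 1"
       "[2,2] = replicate 2 (2::nat)" "[2,2,2] = replicate 3 (2::nat)" by (simp_all add: numeral_eq_Suc)
  then show "P [Suc 0, Suc 0] = ((1-rho)/2, (1-rho)*hh)"
  "P [Suc 0, Suc 0, Suc 0] = ((2*rho-1)/2, (2*rho-1)*hh)"
  "P [2, 2] = ((1+rho)/2, (1-rho)*hh)"
  "P [2, 2, 2] = ((3-2*rho)/2, (2*rho-1)*hh)"
    by (simp_all only: P_rep1 P_rep2 rho_sq rho3) (simp_all add: field_simps)
qed

lemma EE_rep_aux: "e \<in> EE \<Longrightarrow> P (replicate (length e) 1) \<noteq> P e \<and> P (replicate (length e) 2) \<noteq> P e"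
  unfolding EE_def
  by (auto simp: P_ex' P_small prod_eq_iff) (use rho_bnd in linarith)+

lemma EE_rep: assumes "e \<in> EE" shows "P (replicate n 1) \<noteq> P e" "P (replicate n 2) \<noteq> P e"
proof -
  show "P (replicate n 1) \<noteq> P e"
  proof
    assume "P (replicate n 1) = P e"
    then have "length (replicate n (1::nat)) = length e" using len_P EE_set[OF assms] by (metis insertI1 set_replicate_conv_if empty_subsetI insert_subset)
    then have "n = length e" by simp
    then show False using EE_rep_aux[OF assms] \<open>P (replicate n 1) = P e\<close> by simp
  qed
  show "P (replicate n 2) \<noteq> P e"
  proof
    assume "P (replicate n 2) = P e"
    then have "length (replicate n (2::nat)) = length e" using len_P EE_set[OF assms] by (metis insertCI set_replicate_conv_if empty_subsetI insert_subset)
    then have "n = length e" by simp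
    then show False using EE_rep_aux[OF assms] \<open>P (replicate n 2) = P e\<close> by simp
  qed
qed

definition SN :: "nat \<Rightarrow> nat list set" where
  "SN N = {[]} \<union> (\<lambda>n. replicate n 1) ` {1..<N} \<union> (\<lambda>n. replicate n 2) ` {1..<N} \<union> EE"

lemma SN_cases:
  assumes "s \<in> SN N"
  obtains "s = []" | n where "1 \<le> n" "n < N" "s = replicate n 1" | n where "1 \<le> n" "n < N" "s = replicate n 2"
    | "s \<in> EE"
  using assms unfolding SN_def by auto

lemma P_rep_ne_Nil: "1 \<le> n \<Longrightarrow> P (replicate n 1) \<noteq> P []" "1 \<le> n \<Longrightarrow> P (replicate n 2) \<noteq> P []"
  by (auto simp: P_rep1 P_rep1' P_rep2 P_Nil pow_hh1[of n, simplified])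

lemma P_rep_ne_Nil': "1 \<le> n \<Longrightarrow> P [] \<noteq> P (replicate n 1)" "1 \<le> n \<Longrightarrow> P [] \<noteq> P (replicate n 2)"
  using P_rep_ne_Nil by metis+

lemma EE_len: "e \<in> EE \<Longrightarrow> length e \<ge> 2" unfolding EE_def by auto

lemma EE_ne_Nil: "e \<in> EE \<Longrightarrow> P e \<noteq> P []"
  using len_P[of e "[]"] EE_set EE_len by fastforce

lemma P_rep12: "1 \<le> n \<Longrightarrow> P (replicate n 1) \<noteq> P (replicate m 2)"
proof
  assume n: "1 \<le> n" and e: "P (replicate n 1) = P (replicate m 2)"
  then have "n = m" using pow_hh_eq by (simp add: P_rep1 P_rep1' P_rep2)
  with e have "rho^n = 1" by (simp add: P_rep1 P_rep1' P_rep2)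
  then have "rho^n = rho^0" by simp
  then have "n = 0" using rho_pow_inj by blast
  with n show False by simp
qed

lemma P_rep_inj: "P (replicate n i) = P (replicate m i) \<Longrightarrow> i \<in> {1,2} \<Longrightarrow> replicate n i = replicate m i"
  using len_P[of "replicate n i" "replicate m i"] by (auto simp: set_replicate_conv_if)

lemma inj_SN: "inj_on P (SN N)"
proof (rule inj_onI)
  fix s s' assume s: "s \<in> SN N" and s': "s' \<in> SN N" and e: "P s = P s'"
  from s show "s = s'"
  proof (cases rule: SN_cases)
    case 1 show ?thesis using s' e 1
      by (cases rule: SN_cases) (metis P_rep_ne_Nil' EE_ne_Nil)+
  next
    case (2 n) show ?thesis using s' e 2
      by (cases rule: SN_cases) (metis P_rep_ne_Nil EE_rep P_rep12 P_rep_inj insertI1 insertCI)+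
  next
    case (3 n) show ?thesis using s' e 3
      by (cases rule: SN_cases) (metis P_rep_ne_Nil EE_rep P_rep12 P_rep_inj insertI1 insertCI)+
  next
    case 4 show ?thesis using s' e 4
      by (cases rule: SN_cases) (metis EE_ne_Nil EE_rep EE_inj)+
  qed
qed



lemma cs2:
  fixes p q R S :: real
  assumes "R > 0" "S > 0"
  shows "(p+q)^2/(R+S) \<le> p^2/R + q^2/S"
proof -
  have "p^2/R + q^2/S - (p+q)^2/(R+S) = (p*S - q*R)^2/(R*S*(R+S))"
    using assms by (simp add: field_simps power2_eq_square; simp add: algebra_simps)
  moreover have "(p*S - q*R)^2/(R*S*(R+S)) \<ge> 0" using assms by simp
  ultimately show ?thesis by linarith
qed

lemma spine:
  fixes r :: real and x :: "nat \<Rightarrow> real"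
  assumes r: "r > 0" and N: "N \<ge> 2"
  shows "(x 0 - x N)^2 / ((\<Sum>n<N. r^n) - r/(2+2*r+2*r^2)) \<le>
    (\<Sum>n<N. (x n - x (Suc n))^2 / r^n) + ((x 1 - y1)^2/r + (y1-y2)^2/r^2 + (y2-y3)^2/r^3 + (y4-y3)^2/r^3 + (x 2 - y4)^2/r^2)"
  using N
proof (induction N rule: nat_induct_at_least)
  case base
  define K where "K = 2+2*r+2*r^2"
  have K: "K > 1" using r unfolding K_def by (simp add: add_pos_pos)
  define Rp where "Rp = r - r/K"
  have Rp: "Rp > 0" using K r unfolding Rp_def by (simp add: field_simps)
  have r2: "r^2 > 0" "r^3 > 0" using r by auto
  have l1: "((x 1 - y1) + (y1 - y2))^2/(r+r^2) \<le> (x 1 - y1)^2/r + (y1-y2)^2/r^2"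
    by (rule cs2) (use r r2 in \<open>auto intro!: add_pos_pos\<close>)
  have l2: "((x 1 - y1) + (y1 - y2) + (y2 - y3))^2/((r+r^2)+r^3) \<le> ((x 1 - y1) + (y1 - y2))^2/(r+r^2) + (y2-y3)^2/r^3"
    by (rule cs2) (use r r2 in \<open>auto intro!: add_pos_pos\<close>)
  have l3: "((x 1 - y1) + (y1 - y2) + (y2 - y3) + (y3 - y4))^2/((r+r^2+r^3)+r^3) \<le> ((x 1 - y1) + (y1 - y2) + (y2 - y3))^2/((r+r^2)+r^3) + (y3-y4)^2/r^3"
    by (rule cs2) (use r r2 in \<open>auto intro!: add_pos_pos\<close>)
  have l4: "((x 1 - y1) + (y1 - y2) + (y2 - y3) + (y3 - y4) + (y4 - x 2))^2/((r+r^2+r^3+r^3)+r^2) \<le> ((x 1 - y1) + (y1 - y2) + (y2 - y3) + (y3 - y4))^2/((r+r^2+r^3)+r^3) + (y4 - x 2)^2/r^2"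
    by (rule cs2) (use r r2 in \<open>auto intro!: add_pos_pos\<close>)
  have e1: "(x 1 - y1) + (y1 - y2) + (y2 - y3) + (y3 - y4) + (y4 - x 2) = x 1 - x 2" by simp
  have e2: "(y4 - x 2)^2 = (x 2 - y4)^2" "(y3-y4)^2 = (y4-y3)^2" by algebra+
  have loop: "(x 1 - x 2)^2/(r+r^2+r^3+r^3+r^2) \<le> (x 1 - y1)^2/r + (y1-y2)^2/r^2 + (y2-y3)^2/r^3 + (y4-y3)^2/r^3 + (x 2 - y4)^2/r^2"
    using l1 l2 l3 l4 unfolding e1 e2 by linarith
  have RL: "r+r^2+r^3+r^3+r^2 = r*(K-1)" unfolding K_def by (simp add: power2_eq_square power3_eq_cube algebra_simps)
  have Rp2: "Rp = r*(K-1)/K" unfolding Rp_def using K by (simp add: field_simps)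
  have inv: "1/r + 1/(r+r^2+r^3+r^3+r^2) = 1/Rp" unfolding RL Rp2 using K r by (simp add: field_simps)
  have par: "(x 1 - x 2)^2/r + (x 1 - x 2)^2/(r+r^2+r^3+r^3+r^2) = (x 1 - x 2)^2/Rp"
  proof -
    have "(x 1 - x 2)^2/r + (x 1 - x 2)^2/(r+r^2+r^3+r^3+r^2) = (x 1 - x 2)^2 * (1/r + 1/(r+r^2+r^3+r^3+r^2))"
      by (simp add: algebra_simps)
    then show ?thesis unfolding inv by simp
  qed
  have fin: "((x 0 - x 1) + (x 1 - x 2))^2/(1+Rp) \<le> (x 0 - x 1)^2/1 + (x 1 - x 2)^2/Rp"
    by (rule cs2) (use Rp in auto)
  have Z: "(\<Sum>n<2. r^n) - r/(2+2*r+2*r^2) = 1 + Rp" unfolding Rp_def K_def by (simp add: eval_nat_numeral)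
  have S: "(\<Sum>n<2. (x n - x (Suc n))^2 / r^n) = (x 0 - x 1)^2 + (x 1 - x 2)^2/r"
    by (simp add: eval_nat_numeral)
  show ?case unfolding Z S using fin loop par by simp
next
  case (Suc N)
  have pos: "(\<Sum>n<N. r^n) - r/(2+2*r+2*r^2) > 0"
  proof -
    have "(\<Sum>n<2. r^n) \<le> (\<Sum>n<N. r^n)" using Suc(1) r by (intro sum_mono2) auto
    moreover have "r/(2+2*r+2*r^2) < 1 + r"
    proof -
      have K1: "2+2*r+2*r^2 \<ge> 1" using r by (simp add: add_nonneg_nonneg)
      have Kp: "0 < 2+2*r+2*r^2" using K1 by linarith
      have "r*1 \<le> r*(2+2*r+2*r^2)" using mult_left_mono[OF K1, of r] r by simp
      then have "r \<le> r*(2+2*r+2*r^2)" by simp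
      then have "r/(2+2*r+2*r^2) \<le> r" using pos_divide_le_eq[OF Kp, of r r] by blast
      then show ?thesis by simp
    qed
    ultimately show ?thesis by (simp add: eval_nat_numeral)
  qed
  have "((x 0 - x N) + (x N - x (Suc N)))^2 / (((\<Sum>n<N. r^n) - r/(2+2*r+2*r^2)) + r^N)
     \<le> (x 0 - x N)^2 / ((\<Sum>n<N. r^n) - r/(2+2*r+2*r^2)) + (x N - x (Suc N))^2 / r^N"
    by (rule cs2) (use pos r in auto)
  then show ?case using Suc(2) by (simp add: algebra_simps)
qed



lemma cell_lb:
  assumes a: "in_MS a" and r: "r > 0"
  shows "a 0 1 * (f (P s) - f (P (s@[1])))^2 / r ^ length s + a 0 1 * (f (P s) - f (P (s@[2])))^2 / r ^ length s
     \<le> Psi_term r a f (s@[0])"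
proof -
  have M: "in_M a" and e: "a 0 2 = a 0 1" using a by (auto simp: in_MS_def)
  have c: "a 1 2 \<ge> 0" using M by (auto simp: in_M_def)
  have rp: "r ^ length s > 0" using r by simp
  have "a 0 1 * (f (P s) - f (P (s@[1])))^2 + a 0 1 * (f (P s) - f (P (s@[2])))^2
      \<le> a 0 1*(f (P s) - f (P (s@[1])))^2 + a 0 2*(f (P s) - f (P (s@[2])))^2
      + a 1 2*(f (P (s@[1])) - f (P (s@[2])))^2" using c e by simp
  then have "(a 0 1 * (f (P s) - f (P (s@[1])))^2 + a 0 1 * (f (P s) - f (P (s@[2])))^2) / r ^ length s
      \<le> Psi_term r a f (s@[0])" unfolding cellterm[OF M] using rp by (simp add: divide_right_mono)
  then show ?thesis by (simp add: add_divide_distrib)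
qed

lemma b_pos: "in_MS a \<Longrightarrow> a 0 1 > 0"
proof -
  assume a: "in_MS a"
  then have M: "in_M a" and e: "a 0 2 = a 0 1" by (auto simp: in_MS_def)
  then have irr: "irreducible3 a" and nn: "a 0 1 \<ge> 0" by (auto simp: in_M_def)
  have ne: "{0::nat} \<noteq> {0,1,2}" by auto
  have "\<exists>i\<in>{0::nat}. \<exists>j\<in>{0,1,2} - {0}. a i j \<noteq> 0" using irr ne unfolding irreducible3_def
    by (meson empty_subsetI insert_not_empty insert_subset insertI1)
  then have "a 0 1 \<noteq> 0 \<or> a 0 2 \<noteq> 0" by auto
  then show ?thesis using e nn by auto
qed

lemma sum_SN:
  "(\<Sum>s\<in>SN N. g s) = g [] + (\<Sum>n\<in>{1..<N}. g (replicate n 1)) + (\<Sum>n\<in>{1..<N}. g (replicate n 2))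
     + (g [1,2] + g [1,2,1] + g [1,1,2] + g [2,1] + g [2,1,2] + g [2,2,1])"
proof -
  define L where "L = (\<lambda>n. replicate n (1::nat)) ` {1..<N}"
  define R where "R = (\<lambda>n. replicate n (2::nat)) ` {1..<N}"
  have SN: "SN N = (({[]} \<union> L) \<union> R) \<union> EE" unfolding SN_def L_def R_def by auto
  have fin: "finite L" "finite R" "finite EE" unfolding L_def R_def EE_def by auto
  have d1: "{[]} \<inter> L = {}" unfolding L_def by auto
  have d2: "({[]} \<union> L) \<inter> R = {}" unfolding L_def R_def by auto
  have d3: "(({[]} \<union> L) \<union> R) \<inter> EE = {}" unfolding L_def R_def EE_def
    by (auto simp: Cons_replicate_eq eq_commute[of "_ # _" "replicate _ _"])
  have iL: "inj_on (\<lambda>n. replicate n (1::nat)) {1..<N}" by (rule inj_onI) (metis length_replicate)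
  have iR: "inj_on (\<lambda>n. replicate n (2::nat)) {1..<N}" by (rule inj_onI) (metis length_replicate)
  have sL: "(\<Sum>s\<in>L. g s) = (\<Sum>n\<in>{1..<N}. g (replicate n 1))" unfolding L_def using sum.reindex[OF iL] by simp
  have sR: "(\<Sum>s\<in>R. g s) = (\<Sum>n\<in>{1..<N}. g (replicate n 2))" unfolding R_def using sum.reindex[OF iR] by simp
  have sE: "(\<Sum>s\<in>EE. g s) = g [1,2] + g [1,2,1] + g [1,1,2] + g [2,1] + g [2,1,2] + g [2,2,1]"
    unfolding EE_def by (simp add: algebra_simps)
  have e1: "sum g ((({[]} \<union> L) \<union> R) \<union> EE) = sum g (({[]} \<union> L) \<union> R) + sum g EE"
    using fin d3 by (intro sum.union_disjoint) auto
  have e2: "sum g (({[]} \<union> L) \<union> R) = sum g ({[]} \<union> L) + sum g R"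
    using fin d2 by (intro sum.union_disjoint) auto
  have e3: "sum g ({[]} \<union> L) = sum g {[]} + sum g L"
    using fin d1 by (intro sum.union_disjoint) auto
  show ?thesis unfolding SN e1 e2 e3 sL sR sE by simp
qed

lemma SN_props: "finite (SN N)" "\<forall>s\<in>SN N. set s \<subseteq> {1,2}"
  unfolding SN_def EE_def by (auto simp: set_replicate_conv_if)

lemma rep_snoc: "replicate n x @ [x] = replicate (Suc n) x"
  by (simp add: replicate_append_same)

lemma lower_bound:
  assumes W: "is_W1 W" and a: "in_MS a" and r: "r > 0" and N: "N \<ge> 3" and f: "f \<in> PsiDom r a W"
  defines "x \<equiv> \<lambda>n. f (P (replicate n 1))" and "z \<equiv> \<lambda>n. f (P (replicate n 2))"
    and "ZN \<equiv> (\<Sum>n<N. r^n) - r/(2+2*r+2*r^2)"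
  shows "a 0 1 * ((x 0 - x N)^2/ZN) + a 0 1 * ((z 0 - z N)^2/ZN) \<le> Psi r a W f"
proof -
  define b where "b = a 0 1"
  have b: "b > 0" using b_pos[OF a] b_def by simp
  have M: "in_M a" using a by (simp add: in_MS_def)
  define cl where "cl s = Psi_term r a f (s@[0])" for s
  define yL1 where "yL1 = f (P [1,2])"
  define yL2 where "yL2 = f (P [1,2,1])"
  define yL3 where "yL3 = f (P [1,2,1,1])"
  define yL4 where "yL4 = f (P [1,1,2])"
  define yR1 where "yR1 = f (P [2,1])"
  define yR2 where "yR2 = f (P [2,1,2])"
  define yR3 where "yR3 = f (P [2,1,2,2])"
  define yR4 where "yR4 = f (P [2,2,1])"
  have cl_lb: "b * (f (P s) - f (P (s@[1])))^2 / r ^ length s + b * (f (P s) - f (P (s@[2])))^2 / r ^ length s \<le> cl s" for s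
    unfolding b_def cl_def by (rule cell_lb[OF a r])
  have nn: "0 \<le> b * c^2 / r ^ k" for c k using b r by simp
  have x0z0: "z 0 = x 0" unfolding x_def z_def by simp
  have c0: "b * (x 0 - x 1)^2 + b * (x 0 - z 1)^2 \<le> cl []"
    using cl_lb[of "[]"] unfolding x_def z_def by simp
  have cL: "b * (x n - x (Suc n))^2 / r^n + (if n = 1 then b * (x 1 - yL1)^2 / r else 0)
      + (if n = 2 then b * (x 2 - yL4)^2 / r^2 else 0) \<le> cl (replicate n 1)" for n
  proof -
    have h: "b * (x n - x (Suc n))^2 / r^n + b * (x n - f (P (replicate n 1 @ [2])))^2 / r^n \<le> cl (replicate n 1)"
      using cl_lb[of "replicate n 1"] unfolding x_def rep_snoc by simp
    consider "n = 1" | "n = 2" | "n \<noteq> 1" "n \<noteq> 2" by blast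
    then show ?thesis
    proof cases
      case 1 then show ?thesis using h unfolding yL1_def by (simp add: numeral_eq_Suc)
    next
      case 2 then show ?thesis using h unfolding yL4_def by (simp add: numeral_eq_Suc)
    next
      case 3 then show ?thesis using h nn[of "x n - f (P (replicate n 1 @ [2]))" n] by simp
    qed
  qed
  have cR: "b * (z n - z (Suc n))^2 / r^n + (if n = 1 then b * (z 1 - yR1)^2 / r else 0)
      + (if n = 2 then b * (z 2 - yR4)^2 / r^2 else 0) \<le> cl (replicate n 2)" for n
  proof -
    have h: "b * (z n - z (Suc n))^2 / r^n + b * (z n - f (P (replicate n 2 @ [1])))^2 / r^n \<le> cl (replicate n 2)"
      using cl_lb[of "replicate n 2"] unfolding z_def rep_snoc by simp
    consider "n = 1" | "n = 2" | "n \<noteq> 1" "n \<noteq> 2" by blast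
    then show ?thesis
    proof cases
      case 1 then show ?thesis using h unfolding yR1_def by (simp add: numeral_eq_Suc)
    next
      case 2 then show ?thesis using h unfolding yR4_def by (simp add: numeral_eq_Suc)
    next
      case 3 then show ?thesis using h nn[of "z n - f (P (replicate n 2 @ [1]))" n] by simp
    qed
  qed
  have e1: "b * (yL1 - yL2)^2 / r^2 \<le> cl [1,2]"
    using cl_lb[of "[1,2]"] nn[of "f (P [1,2]) - f (P [1,2,2])" 2] unfolding yL1_def yL2_def by (simp add: numeral_eq_Suc)
  have e2: "b * (yL2 - yL3)^2 / r^3 \<le> cl [1,2,1]"
    using cl_lb[of "[1,2,1]"] nn[of "f (P [1,2,1]) - f (P [1,2,1,2])" 3] unfolding yL2_def yL3_def by (simp add: numeral_eq_Suc)
  have e3: "b * (yL4 - yL3)^2 / r^3 \<le> cl [1,1,2]"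
    using cl_lb[of "[1,1,2]"] nn[of "f (P [1,1,2]) - f (P [1,1,2,1])" 3] unfolding yL4_def yL3_def P_ex(7) by (simp add: numeral_eq_Suc)
  have e4: "b * (yR1 - yR2)^2 / r^2 \<le> cl [2,1]"
    using cl_lb[of "[2,1]"] nn[of "f (P [2,1]) - f (P [2,1,1])" 2] unfolding yR1_def yR2_def by (simp add: numeral_eq_Suc)
  have e5: "b * (yR2 - yR3)^2 / r^3 \<le> cl [2,1,2]"
    using cl_lb[of "[2,1,2]"] nn[of "f (P [2,1,2]) - f (P [2,1,2,1])" 3] unfolding yR2_def yR3_def by (simp add: numeral_eq_Suc)
  have e6: "b * (yR4 - yR3)^2 / r^3 \<le> cl [2,2,1]"
    using cl_lb[of "[2,2,1]"] nn[of "f (P [2,2,1]) - f (P [2,2,1,2])" 3] unfolding yR4_def yR3_def P_ex(8) by (simp add: numeral_eq_Suc)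
  have fin: "finite {1..<N}" by simp
  have m12: "1 \<in> {1..<N}" "2 \<in> {1..<N}" using N by auto
  have sumL: "(\<Sum>n\<in>{1..<N}. b * (x n - x (Suc n))^2 / r^n) + b * (x 1 - yL1)^2 / r + b * (x 2 - yL4)^2 / r^2
      \<le> (\<Sum>n\<in>{1..<N}. cl (replicate n 1))"
  proof -
    have "(\<Sum>n\<in>{1..<N}. b * (x n - x (Suc n))^2 / r^n + (if n = 1 then b * (x 1 - yL1)^2 / r else 0)
      + (if n = 2 then b * (x 2 - yL4)^2 / r^2 else 0)) \<le> (\<Sum>n\<in>{1..<N}. cl (replicate n 1))"
      by (rule sum_mono) (rule cL)
    then show ?thesis unfolding sum.distrib using m12 fin by (simp add: sum.delta)
  qed
  have sumR: "(\<Sum>n\<in>{1..<N}. b * (z n - z (Suc n))^2 / r^n) + b * (z 1 - yR1)^2 / r + b * (z 2 - yR4)^2 / r^2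
      \<le> (\<Sum>n\<in>{1..<N}. cl (replicate n 2))"
  proof -
    have "(\<Sum>n\<in>{1..<N}. b * (z n - z (Suc n))^2 / r^n + (if n = 1 then b * (z 1 - yR1)^2 / r else 0)
      + (if n = 2 then b * (z 2 - yR4)^2 / r^2 else 0)) \<le> (\<Sum>n\<in>{1..<N}. cl (replicate n 2))"
      by (rule sum_mono) (rule cR)
    then show ?thesis unfolding sum.distrib using m12 fin by (simp add: sum.delta)
  qed
  have tot: "(\<Sum>s\<in>SN N. cl s) \<le> Psi r a W f"
    unfolding cl_def by (rule sum_le_Psi[OF W M r f SN_props inj_SN])
  have split0: "(\<Sum>n<N. g n) = g 0 + (\<Sum>n\<in>{1..<N}. g n)" for g :: "nat \<Rightarrow> real"
    using N by (simp add: lessThan_atLeast0 sum.atLeast_Suc_lessThan)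
  define SpL where "SpL = (\<Sum>n<N. (x n - x (Suc n))^2 / r^n)"
  define SpR where "SpR = (\<Sum>n<N. (z n - z (Suc n))^2 / r^n)"
  define LpL where "LpL = (x 1 - yL1)^2/r + (yL1-yL2)^2/r^2 + (yL2-yL3)^2/r^3 + (yL4-yL3)^2/r^3 + (x 2 - yL4)^2/r^2"
  define LpR where "LpR = (z 1 - yR1)^2/r + (yR1-yR2)^2/r^2 + (yR2-yR3)^2/r^3 + (yR4-yR3)^2/r^3 + (z 2 - yR4)^2/r^2"
  have bSpL: "b * SpL = b * (x 0 - x 1)^2 + (\<Sum>n\<in>{1..<N}. b * (x n - x (Suc n))^2 / r^n)"
    unfolding SpL_def split0 by (simp add: sum_distrib_left algebra_simps)
  have bSpR: "b * SpR = b * (z 0 - z 1)^2 + (\<Sum>n\<in>{1..<N}. b * (z n - z (Suc n))^2 / r^n)"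
    unfolding SpR_def split0 by (simp add: sum_distrib_left algebra_simps)
  have "b * (SpL + LpL) + b * (SpR + LpR) \<le> (\<Sum>s\<in>SN N. cl s)"
    unfolding sum_SN distrib_left bSpL bSpR unfolding LpL_def LpR_def x0z0
    using c0 sumL sumR e1 e2 e3 e4 e5 e6 by (simp add: algebra_simps)
  moreover have "(x 0 - x N)^2/ZN \<le> SpL + LpL" unfolding ZN_def SpL_def LpL_def
    using spine[OF r, of N x yL1 yL2 yL3 yL4] N by simp
  moreover have "(z 0 - z N)^2/ZN \<le> SpR + LpR" unfolding ZN_def SpR_def LpR_def
    using spine[OF r, of N z yR1 yR2 yR3 yR4] N by simp
  ultimately show ?thesis using tot b unfolding b_def[symmetric]
    by (smt (verit) mult_left_mono)
qed



definition gT :: "real \<Rightarrow> real \<Rightarrow> real" where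
  "gT t y = (if y = hh then 1 else if y = rho*hh then t else 0)"

definition fT :: "real \<Rightarrow> real \<times> real \<Rightarrow> real" where "fT t x = gT t (snd x)"

lemma fT_P: "set s \<subseteq> {1,2} \<Longrightarrow> fT t (P s) = (if length s = 0 then 1 else if length s = 1 then t else 0)"
proof -
  assume s: "set s \<subseteq> {1,2}"
  have e1: "rho ^ n * hh = rho * hh \<longleftrightarrow> n = 1" for n using pow_hh_eq[of n 1] by simp
  show ?thesis unfolding fT_def gT_def snd_P[OF s] using pow_hh1 e1 by auto
qed

lemma words0_cases:
  assumes "v \<in> words0"
  obtains s where "v = s@[0]" "set s \<subseteq> {1,2}"
  using assms unfolding words0_def by auto

lemma fT_term_zero:
  assumes M: "in_M a" and v: "v \<in> words0" "v \<notin> {[0],[1,0],[2,0]}"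
  shows "Psi_term r a (fT t) v = 0"
proof -
  obtain s where s: "v = s@[0]" "set s \<subseteq> {1,2}" using v(1) by (rule words0_cases)
  have "s \<noteq> []" "s \<noteq> [1]" "s \<noteq> [2]" using v(2) s by auto
  then have L: "length s \<ge> 2" using s(2)
    by (cases s; cases "tl s") (auto)
  have s1: "set (s@[1]) \<subseteq> {1,2}" "set (s@[2]) \<subseteq> {1,2}" using s(2) by auto
  show ?thesis unfolding s(1) cellterm[OF M] fT_P[OF s(2)] fT_P[OF s1(1)] fT_P[OF s1(2)] using L by auto
qed

lemma fT_sum:
  assumes M: "in_M a" and r: "r > 0" and W: "is_W1 W"
  shows "fT t \<in> PsiDom r a W" "Psi r a W (fT t) \<le> (\<Sum>v\<in>{[0],[1,0],[2,0]}. Psi_term r a (fT t) v)"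
proof -
  let ?T = "W \<inter> {[0],[1,0],[2,0]}"
  have Wsub: "W \<subseteq> words0" using W unfolding is_W1_def by auto
  have z: "\<And>v. v \<in> W - ?T \<Longrightarrow> Psi_term r a (fT t) v = 0" using fT_term_zero[OF M] Wsub by blast
  have "Psi_term r a (fT t) summable_on ?T" by simp
  then show "fT t \<in> PsiDom r a W" unfolding PsiDom_def
    using summable_on_cong_neutral[of ?T W "Psi_term r a (fT t)" "Psi_term r a (fT t)"] z by auto
  have "Psi r a W (fT t) = infsum (Psi_term r a (fT t)) ?T" unfolding Psi_def
    by (rule infsum_cong_neutral) (use z in auto)
  also have "\<dots> = sum (Psi_term r a (fT t)) ?T" by simp
  also have "\<dots> \<le> (\<Sum>v\<in>{[0],[1,0],[2,0]}. Psi_term r a (fT t) v)"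
    by (rule sum_mono2) (auto intro: Psi_term_nonneg[OF M r])
  finally show "Psi r a W (fT t) \<le> (\<Sum>v\<in>{[0],[1,0],[2,0]}. Psi_term r a (fT t) v)" .
qed

lemma fT_val:
  assumes a: "in_MS a" and r: "r > 0"
  shows "(\<Sum>v\<in>{[0],[1,0],[2,0]}. Psi_term r a (fT t) v) = 2 * a 0 1 * (1-t)^2 + 4 * a 0 1 * t^2 / r"
proof -
  have M: "in_M a" and e: "a 0 2 = a 0 1" using a by (auto simp: in_MS_def)
  have t0: "Psi_term r a (fT t) ([]@[0]) = 2 * a 0 1 * (1-t)^2"
    unfolding cellterm[OF M] by (simp add: fT_P e)
  have t1: "Psi_term r a (fT t) ([1]@[0]) = 2 * a 0 1 * t^2 / r"
    unfolding cellterm[OF M] by (simp add: fT_P e)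
  have t2: "Psi_term r a (fT t) ([2]@[0]) = 2 * a 0 1 * t^2 / r"
    unfolding cellterm[OF M] by (simp add: fT_P e)
  show ?thesis using t0 t1 t2 by simp
qed

lemma fT_restr:
  assumes "0 < t"
  shows "restricts_to W (fT t) (\<lambda>i. if i = 0 then 1 else 0)"
proof -
  have rh: "0 < rho * hh" "rho * hh < hh" using rho_pos hh_pos rho_lt1 by auto
  have ev: "((fT t) \<longlongrightarrow> 0) (at p within V1 W)" if "snd p = 0" for p
  proof -
    have "((\<lambda>x. snd x) \<longlongrightarrow> snd p) (at p within V1 W)" by (intro tendsto_intros)
    then have "eventually (\<lambda>x. snd x < rho*hh) (at p within V1 W)" using that rh by (auto dest: order_tendstoD)
    then have "eventually (\<lambda>x. fT t x = 0) (at p within V1 W)"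
      by eventually_elim (use rh in \<open>auto simp: fT_def gT_def\<close>)
    then show ?thesis by (rule tendsto_eventually)
  qed
  show ?thesis unfolding restricts_to_def using ev[of "q 1"] ev[of "q 2"]
    by (auto simp: q0 q2 fT_def gT_def)
qed

lemma ZN_bounds:
  fixes r :: real
  assumes r: "0 < r" "r < 1" and N: "N \<ge> 1"
  shows "0 < (\<Sum>n<N. r^n) - r/(2+2*r+2*r^2)" "(\<Sum>n<N. r^n) - r/(2+2*r+2*r^2) \<le> 1/(1-r) - r/(2+2*r+2*r^2)"
proof -
  have "(\<Sum>n<1. r^n) \<le> (\<Sum>n<N. r^n)" using N r by (intro sum_mono2) auto
  then have s1: "1 \<le> (\<Sum>n<N. r^n)" by simp
  have K1: "2+2*r+2*r^2 \<ge> 1" using r by (simp add: add_nonneg_nonneg)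
  have Kp: "0 < 2+2*r+2*r^2" using K1 by linarith
  have "r*1 \<le> r*(2+2*r+2*r^2)" using mult_left_mono[OF K1, of r] r by simp
  then have "r \<le> r*(2+2*r+2*r^2)" by simp
  then have "r/(2+2*r+2*r^2) \<le> r" using pos_divide_le_eq[OF Kp, of r r] by blast
  then show "0 < (\<Sum>n<N. r^n) - r/(2+2*r+2*r^2)" using s1 r by linarith
  have "(\<Sum>n<N. r^n) = (1 - r^N)/(1-r)" using r by (simp add: sum_gp_strict)
  also have "\<dots> \<le> 1/(1-r)" using r by (intro divide_right_mono) auto
  finally show "(\<Sum>n<N. r^n) - r/(2+2*r+2*r^2) \<le> 1/(1-r) - r/(2+2*r+2*r^2)" by simp
qed

lemma P_in_V1:
  assumes W: "is_W1 W" and s: "set s \<subseteq> {1,2}"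
  shows "P s \<in> V1 W"
proof -
  have "P s = Fw (rep W s) (q 0)" using rep_props(2)[OF W s] cell_v0 by simp
  then show ?thesis unfolding V1_def using rep_props(1)[OF W s] by blast
qed

lemma seq_lim:
  assumes W: "is_W1 W" and f: "restricts_to W f u"
  shows "(\<lambda>N. f (P (replicate N 1))) \<longlonglongrightarrow> u 1" "(\<lambda>N. f (P (replicate N 2))) \<longlonglongrightarrow> u 2"
proof -
  have rn: "norm rho < 1" using rho_pos rho_lt1 by simp
  have pw: "(\<lambda>N. rho^N) \<longlonglongrightarrow> 0" by (rule LIMSEQ_power_zero[OF rn])
  have set1: "set (replicate N (1::nat)) \<subseteq> {1,2}" "set (replicate N (2::nat)) \<subseteq> {1,2}" for N
    by (auto simp: set_replicate_conv_if)
  have sndpos: "snd (P (replicate N i)) > 0" if "i \<in> {1,2}" for N i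
    using that rho_pos hh_pos by (subst snd_P) (auto simp: set_replicate_conv_if)
  have l1: "filterlim (\<lambda>N. P (replicate N 1)) (at (q 1) within V1 W) sequentially"
  proof (subst filterlim_at, intro conjI)
    show "\<forall>\<^sub>F N in sequentially. P (replicate N 1) \<in> V1 W \<and> P (replicate N 1) \<noteq> q 1"
    proof (rule always_eventually, rule allI)
      fix N
      have "snd (P (replicate N 1)) \<noteq> snd (q 1)" using sndpos[of 1 N] by (simp add: q1)
      then show "P (replicate N 1) \<in> V1 W \<and> P (replicate N 1) \<noteq> q 1"
        using P_in_V1[OF W set1(1)] by auto
    qed
    have "(\<lambda>N. (rho^N/2, rho^N*hh)) \<longlonglongrightarrow> (0/2, 0*hh)" by (intro tendsto_intros) (use rn in auto)
    then show "(\<lambda>N. P (replicate N 1)) \<longlonglongrightarrow> q 1" by (simp add: P_rep1 P_rep1' q1)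
  qed
  have l2: "filterlim (\<lambda>N. P (replicate N 2)) (at (q 2) within V1 W) sequentially"
  proof (subst filterlim_at, intro conjI)
    show "\<forall>\<^sub>F N in sequentially. P (replicate N 2) \<in> V1 W \<and> P (replicate N 2) \<noteq> q 2"
    proof (rule always_eventually, rule allI)
      fix N
      have "snd (P (replicate N 2)) \<noteq> snd (q 2)" using sndpos[of 2 N] by (simp add: q2)
      then show "P (replicate N 2) \<in> V1 W \<and> P (replicate N 2) \<noteq> q 2"
        using P_in_V1[OF W set1(2)] by auto
    qed
    have "(\<lambda>N. (rho^N/2 + 1 - rho^N, rho^N*hh)) \<longlonglongrightarrow> (0/2 + 1 - 0, 0*hh)" by (intro tendsto_intros) (use rn in auto)
    then show "(\<lambda>N. P (replicate N 2)) \<longlonglongrightarrow> q 2" by (simp add: P_rep2 q2)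
  qed
  from f have t1: "(f \<longlongrightarrow> u 1) (at (q 1) within V1 W)" and t2: "(f \<longlongrightarrow> u 2) (at (q 2) within V1 W)"
    unfolding restricts_to_def by auto
  show "(\<lambda>N. f (P (replicate N 1))) \<longlonglongrightarrow> u 1" by (rule filterlim_compose[OF t1 l1])
  show "(\<lambda>N. f (P (replicate N 2))) \<longlonglongrightarrow> u 2" by (rule filterlim_compose[OF t2 l2])
qed

lemma lower_f:
  assumes W: "is_W1 W" and a: "in_MS a" and r: "rho < r" "r < 1"
    and f: "f \<in> PsiDom r a W" "restricts_to W f (\<lambda>i. if i = 0 then 1 else 0)"
  shows "2 * a 0 1 / (1/(1-r) - r/(2+2*r+2*r^2)) \<le> Psi r a W f"
proof -
  have r0: "r > 0" using r rho_pos by simp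
  define b where "b = a 0 1"
  have b: "b > 0" using b_pos[OF a] b_def by simp
  define Z where "Z = 1/(1-r) - r/(2+2*r+2*r^2)"
  define x where "x = (\<lambda>n. f (P (replicate n 1)))"
  define z where "z = (\<lambda>n. f (P (replicate n 2)))"
  have x0: "x 0 = 1" "z 0 = 1" using f(2) unfolding x_def z_def restricts_to_def by (auto simp: P_def)
  have xl: "x \<longlonglongrightarrow> 0" "z \<longlonglongrightarrow> 0" using seq_lim[OF W f(2)] unfolding x_def z_def by auto
  have Zp: "Z > 0" using ZN_bounds[OF r0 r(2), of 1] unfolding Z_def by linarith
  define g where "g N = b * ((x 0 - x N)^2/Z) + b * ((z 0 - z N)^2/Z)" for N
  have gl: "g \<longlonglongrightarrow> b * ((1 - 0)^2/Z) + b * ((1 - 0)^2/Z)" unfolding g_def x0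
    by (intro tendsto_intros xl) (use Zp in auto)
  have "\<exists>N0. \<forall>N\<ge>N0. g N \<le> Psi r a W f"
  proof (intro exI allI impI)
    fix N :: nat assume N: "N \<ge> 3"
    define ZN where "ZN = (\<Sum>n<N. r^n) - r/(2+2*r+2*r^2)"
    have ZN: "0 < ZN" "ZN \<le> Z" using ZN_bounds[OF r0 r(2), of N] N unfolding ZN_def Z_def by auto
    have "(x 0 - x N)^2/Z \<le> (x 0 - x N)^2/ZN" "(z 0 - z N)^2/Z \<le> (z 0 - z N)^2/ZN"
      using ZN by (auto intro: divide_left_mono)
    then have "g N \<le> b * ((x 0 - x N)^2/ZN) + b * ((z 0 - z N)^2/ZN)" unfolding g_def using b
      by (smt (verit) mult_left_mono)
    also have "\<dots> \<le> Psi r a W f" using lower_bound[OF W a r0 N f(1)] unfolding b_def x_def z_def ZN_def .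
    finally show "g N \<le> Psi r a W f" .
  qed
  then have "b * ((1 - 0)^2/Z) + b * ((1 - 0)^2/Z) \<le> Psi r a W f" by (rule LIMSEQ_le_const2[OF gl])
  then show ?thesis unfolding Z_def[symmetric] b_def[symmetric] using Zp by (simp add: field_simps)
qed

theorem lemma5p6:
  fixes r lam :: real and a :: "nat \<Rightarrow> nat \<Rightarrow> real" and W1 :: "nat list set"
  assumes "rho < r" and "r < 1"
    and "is_W1 W1"
    and "lam > 0"
    and "in_MS a"
    and "\<forall>u. R_r r a W1 u = lam * DF a u u"
  shows "inverse (1 / (1 - r) - r / (2 + 2 * r + 2 * r\<^sup>2)) \<le> lam \<and> lam \<le> 2 / (2 + r)"
proof -
  note r = assms(1,2) and W = assms(3) and a = assms(5) and H = assms(6)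
  have r0: "r > 0" using r rho_pos by simp
  have M: "in_M a" and e: "a 0 2 = a 0 1" using a by (auto simp: in_MS_def)
  define b where "b = a 0 1"
  have b: "b > 0" using b_pos[OF a] b_def by simp
  define u0 where "u0 = (\<lambda>i::nat. if i = 0 then (1::real) else 0)"
  have D: "DF a u0 u0 = 2 * b" unfolding DF_expand[OF M] u0_def b_def using e by simp
  define S where "S = {Psi r a W1 f | f. f \<in> PsiDom r a W1 \<and> restricts_to W1 f u0}"
  have R: "R_r r a W1 u0 = Inf S" unfolding R_r_def S_def ..
  define t where "t = r / (2 + r)"
  have t: "t > 0" unfolding t_def using r0 by simp
  have inS: "Psi r a W1 (fT t) \<in> S" unfolding S_def u0_def using fT_sum(1)[OF M r0 W] fT_restr[OF t] by blast
  have bdd: "bdd_below S" unfolding S_def bdd_below_def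
    by (rule exI[of _ 0]) (auto simp: Psi_def intro!: infsum_nonneg Psi_term_nonneg[OF M r0])
  have up: "Psi r a W1 (fT t) \<le> 2 * b * (1-t)^2 + 4 * b * t^2 / r"
    using fT_sum(2)[OF M r0 W] fT_val[OF a r0] unfolding b_def by simp
  have upv: "2 * b * (1-t)^2 + 4 * b * t^2 / r = 2 * b * (2 / (2 + r))"
  proof -
    have p: "2 + r > 0" using r0 by simp
    have e1: "1 - t = 2/(2+r)" unfolding t_def using p by (simp add: field_simps)
    have nz: "2 + r \<noteq> 0" "r \<noteq> 0" using p r0 by auto
    have e2: "t^2/r = r/(2+r)^2"
    proof -
      have "t^2/r = (r*r)/((2+r)^2*r)" unfolding t_def by (simp add: power2_eq_square)
      also have "\<dots> = r/(2+r)^2" using nz by (simp add: mult.commute)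
      finally show ?thesis .
    qed
    have "2 * b * (1-t)^2 + 4 * b * t^2 / r = 2 * b * (1-t)^2 + 4 * b * (t^2 / r)" by simp
    also have "\<dots> = (8*b + 4*b*r)/(2+r)^2" unfolding e1 e2 power_divide by (simp add: add_divide_distrib)
    also have "\<dots> = (4*b*(2+r))/((2+r)*(2+r))" by (simp add: algebra_simps power2_eq_square)
    also have "\<dots> = 2 * b * (2 / (2 + r))" using p by simp
    finally show ?thesis .
  qed
  have "(2 * b) * lam \<le> (2 * b) * (2 / (2 + r))"
    using H[rule_format, of u0] D R cInf_lower[OF inS bdd] up upv by (simp only: mult.commute)
  then have ub: "lam \<le> 2 / (2 + r)" using b mult_le_cancel_left_pos[of "2*b" lam "2 / (2 + r)"] by simp
  define Z where "Z = 1/(1-r) - r/(2+2*r+2*r^2)"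
  have Zp: "Z > 0" using ZN_bounds[OF r0 r(2), of 1] unfolding Z_def by linarith
  have "2 * b / Z \<le> Inf S"
  proof (rule cInf_greatest)
    show "S \<noteq> {}" using inS by blast
    fix y assume "y \<in> S"
    then obtain f where f: "y = Psi r a W1 f" "f \<in> PsiDom r a W1" "restricts_to W1 f u0" unfolding S_def by blast
    show "2 * b / Z \<le> y" using lower_f[OF W a r f(2)] f(3) unfolding f(1) Z_def b_def u0_def by simp
  qed
  then have "2 * b / Z \<le> lam * (2 * b)" using H[rule_format, of u0] D R by simp
  then have "1 / Z \<le> lam" using b Zp by (simp add: field_simps)
  then have lb: "inverse Z \<le> lam" by (simp add: inverse_eq_divide)
  show ?thesis using ub lb unfolding Z_def by simp
qed


end
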